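(* Let $(Q,P)$ be a weakly quasi-lattice ordered group and let $\Lambda$ be a $P$-graph with $\mathrm{FA}(\Lambda)\neq\emptyset$. Let $\mathcal{X}(\Lambda)*P=\{(x,m)\in\mathcal{X}(\Lambda)\times P: x\cap\Lambda^m\neq\emptyset\}$ and define $T:\mathcal{X}(\Lambda)*P\to\mathcal{X}(\Lambda)$ by $T(x,m)=x\cdot m:=\{\mu\in\Lambda: x(0,m)\mu\in x\}$, where $x(0,m)$ is the unique element of $x\cap\Lambda^m$. Then $T$ is well defined with values in $\mathcal{X}(\Lambda)$ and $(\mathcal{X}(\Lambda),P,T)$ is a semigroup action: (S1) for all $x\in\mathcal{X}(\Lambda)$, $(x,e)\in\mathcal{X}(\Lambda)*P$ and $x\cdot e=x$; (S2) for all $x\in\mathcal{X}(\Lambda)$ and $m,n\in P$, $(x,mn)\in\mathcal{X}(\Lambda)*P$ if and only if $(x,m)\in\mathcal{X}(\Lambda)*P$ and $(x\cdot m,n)\in\mathcal{X}(\Lambda)*P$, in which case $(x\cdot m)\cdot n=x\cdot(mn)$.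
   Context: $(Q,P)$ weakly quasi-lattice ordered: $Q$ a discrete group, $P\subseteq Q$ a subsemigroup containing the identity $e$ with $P\cap P^{-1}=\{e\}$, and, with $p\le r$ meaning $pq=r$ for some $q\in P$, any two elements of $P$ with a common upper bound have a least common upper bound. A $P$-graph is a countable small category $\Lambda$ (range/source $r,s$) with a functor $d:\Lambda\to P$ with unique factorisation (if $d(\lambda)=pq$ there are unique $\mu,\nu$ with $\lambda=\mu\nu$, $d(\mu)=p$, $d(\nu)=q$). Write $\Lambda^m=d^{-1}(m)$, $\lambda\Lambda=\{\lambda\mu: s(\lambda)=r(\mu)\}$, $\mu\preceq\lambda$ iff $\lambda\in\mu\Lambda$. $\mathrm{FA}(\Lambda)$ is the set of $\lambda$ such that for all $\mu\in\lambda\Lambda,\nu\in\Lambda$ there is a finite $J\subseteq\Lambda$ with $\mu\Lambda\cap\nu\Lambda=\bigcup_{\kappa\in J}\kappa\Lambda$. A filter is a nonempty hereditary and directed subset of $\Lambda$ (w.r.t. $\preceq$); for a filter $x$, $d|_x$ is injective. The path space is $\mathcal{X}(\Lambda)=\{x: x\text{ a filter}, x\cap\mathrm{FA}(\Lambda)\neq\emptyset\}$. *)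

theory Defs
  imports Main "HOL-Library.Countable_Set"
begin

text \<open>The group Q is a type of class group_add (written additively, not necessarily
commutative; identity e = 0, product pq = p + q). P is a subset of Q.\<close>

definition P_le :: "'q::group_add set \<Rightarrow> 'q \<Rightarrow> 'q \<Rightarrow> bool" where
  "P_le P p r \<longleftrightarrow> (\<exists>q\<in>P. p + q = r)"

definition wqlo :: "'q::group_add set \<Rightarrow> bool" where
  "wqlo P \<longleftrightarrow>
     0 \<in> P \<and> (\<forall>p\<in>P. \<forall>q\<in>P. p + q \<in> P) \<and> P \<inter> uminus ` P = {0} \<and>
     (\<forall>p\<in>P. \<forall>q\<in>P. (\<exists>r\<in>P. P_le P p r \<and> P_le P q r) \<longrightarrow>
        (\<exists>s\<in>P. P_le P p s \<and> P_le P q s \<and> (\<forall>r\<in>P. P_le P p r \<and> P_le P q r \<longrightarrow> P_le P s r)))"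

record ('o, 'a, 'q) pgraph =
  Obj :: "'o set"
  Mor :: "'a set"
  rng :: "'a \<Rightarrow> 'o"
  src :: "'a \<Rightarrow> 'o"
  cmp :: "'a \<Rightarrow> 'a \<Rightarrow> 'a"
  idm :: "'o \<Rightarrow> 'a"
  deg :: "'a \<Rightarrow> 'q"

definition small_category :: "('o, 'a, 'q) pgraph \<Rightarrow> bool" where
  "small_category G \<longleftrightarrow>
     (\<forall>v\<in>Obj G. idm G v \<in> Mor G \<and> rng G (idm G v) = v \<and> src G (idm G v) = v) \<and>
     (\<forall>l\<in>Mor G. rng G l \<in> Obj G \<and> src G l \<in> Obj G) \<and>
     (\<forall>l\<in>Mor G. \<forall>m\<in>Mor G. src G l = rng G m \<longrightarrow>
        cmp G l m \<in> Mor G \<and> rng G (cmp G l m) = rng G l \<and> src G (cmp G l m) = src G m) \<and>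
     (\<forall>l\<in>Mor G. cmp G (idm G (rng G l)) l = l \<and> cmp G l (idm G (src G l)) = l) \<and>
     (\<forall>l\<in>Mor G. \<forall>m\<in>Mor G. \<forall>n\<in>Mor G. src G l = rng G m \<longrightarrow> src G m = rng G n \<longrightarrow>
        cmp G (cmp G l m) n = cmp G l (cmp G m n))"

definition is_P_graph :: "'q::group_add set \<Rightarrow> ('o, 'a, 'q) pgraph \<Rightarrow> bool" where
  "is_P_graph P G \<longleftrightarrow>
     small_category G \<and> countable (Obj G) \<and> countable (Mor G) \<and>
     (\<forall>l\<in>Mor G. deg G l \<in> P) \<and>
     (\<forall>v\<in>Obj G. deg G (idm G v) = 0) \<and>
     (\<forall>l\<in>Mor G. \<forall>m\<in>Mor G. src G l = rng G m \<longrightarrow> deg G (cmp G l m) = deg G l + deg G m) \<and>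
     (\<forall>l\<in>Mor G. \<forall>p\<in>P. \<forall>q\<in>P. deg G l = p + q \<longrightarrow>
        (\<exists>!(m, n). m \<in> Mor G \<and> n \<in> Mor G \<and> src G m = rng G n \<and>
                   l = cmp G m n \<and> deg G m = p \<and> deg G n = q))"

definition Lam_deg :: "('o, 'a, 'q) pgraph \<Rightarrow> 'q \<Rightarrow> 'a set" where
  "Lam_deg G m = {l \<in> Mor G. deg G l = m}"

definition ext_set :: "('o, 'a, 'q) pgraph \<Rightarrow> 'a \<Rightarrow> 'a set" where
  "ext_set G l = {cmp G l m | m. m \<in> Mor G \<and> src G l = rng G m}"

definition preceq :: "('o, 'a, 'q) pgraph \<Rightarrow> 'a \<Rightarrow> 'a \<Rightarrow> bool" where
  "preceq G m l \<longleftrightarrow> m \<in> Mor G \<and> l \<in> ext_set G m"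

definition FA :: "('o, 'a, 'q) pgraph \<Rightarrow> 'a set" where
  "FA G = {l \<in> Mor G. \<forall>m\<in>ext_set G l. \<forall>n\<in>Mor G.
            \<exists>J. finite J \<and> J \<subseteq> Mor G \<and> ext_set G m \<inter> ext_set G n = (\<Union>k\<in>J. ext_set G k)}"

definition is_filter :: "('o, 'a, 'q) pgraph \<Rightarrow> 'a set \<Rightarrow> bool" where
  "is_filter G x \<longleftrightarrow> x \<subseteq> Mor G \<and> x \<noteq> {} \<and>
     (\<forall>l\<in>x. \<forall>m. preceq G m l \<longrightarrow> m \<in> x) \<and>
     (\<forall>l\<in>x. \<forall>m\<in>x. \<exists>n\<in>x. preceq G l n \<and> preceq G m n)"

definition path_space :: "('o, 'a, 'q) pgraph \<Rightarrow> 'a set set" where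
  "path_space G = {x. is_filter G x \<and> x \<inter> FA G \<noteq> {}}"

definition XP :: "'q set \<Rightarrow> ('o, 'a, 'q) pgraph \<Rightarrow> ('a set \<times> 'q) set" where
  "XP P G = {(x, m). x \<in> path_space G \<and> m \<in> P \<and> x \<inter> Lam_deg G m \<noteq> {}}"

definition seg0 :: "('o, 'a, 'q) pgraph \<Rightarrow> 'a set \<Rightarrow> 'q \<Rightarrow> 'a" where
  "seg0 G x m = (THE l. l \<in> x \<and> deg G l = m)"

definition shift :: "('o, 'a, 'q) pgraph \<Rightarrow> 'a set \<Rightarrow> 'q \<Rightarrow> 'a set" where
  "shift G x m = {u \<in> Mor G. src G (seg0 G x m) = rng G u \<and> cmp G (seg0 G x m) u \<in> x}"

end

theory Submission
  imports Defs
begin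

locale pg =
  fixes P :: "'q::group_add set" and G :: "('o, 'a, 'q) pgraph"
  assumes PG: "is_P_graph P G"
begin

lemma cat: "small_category G" using PG by (simp add: is_P_graph_def)

lemma cmpM: "l \<in> Mor G \<Longrightarrow> m \<in> Mor G \<Longrightarrow> src G l = rng G m \<Longrightarrow>
   cmp G l m \<in> Mor G \<and> rng G (cmp G l m) = rng G l \<and> src G (cmp G l m) = src G m"
  using cat unfolding small_category_def by blast

lemma cM: "l \<in> Mor G \<Longrightarrow> m \<in> Mor G \<Longrightarrow> src G l = rng G m \<Longrightarrow> cmp G l m \<in> Mor G"
  using cmpM by blast
lemma cR: "l \<in> Mor G \<Longrightarrow> m \<in> Mor G \<Longrightarrow> src G l = rng G m \<Longrightarrow> rng G (cmp G l m) = rng G l"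
  using cmpM by blast
lemma cS: "l \<in> Mor G \<Longrightarrow> m \<in> Mor G \<Longrightarrow> src G l = rng G m \<Longrightarrow> src G (cmp G l m) = src G m"
  using cmpM by blast

lemma assoc: "l \<in> Mor G \<Longrightarrow> m \<in> Mor G \<Longrightarrow> n \<in> Mor G \<Longrightarrow> src G l = rng G m \<Longrightarrow>
   src G m = rng G n \<Longrightarrow> cmp G (cmp G l m) n = cmp G l (cmp G m n)"
  using cat unfolding small_category_def by blast

lemma idl: "l \<in> Mor G \<Longrightarrow> cmp G (idm G (rng G l)) l = l"
  using cat unfolding small_category_def by blast

lemma idr: "l \<in> Mor G \<Longrightarrow> cmp G l (idm G (src G l)) = l"
  using cat unfolding small_category_def by blast

lemma objs: "l \<in> Mor G \<Longrightarrow> rng G l \<in> Obj G \<and> src G l \<in> Obj G"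
  using cat unfolding small_category_def by blast

lemma idmM: "v \<in> Obj G \<Longrightarrow> idm G v \<in> Mor G \<and> rng G (idm G v) = v \<and> src G (idm G v) = v"
  using cat unfolding small_category_def by blast

lemma deg_cmp: "l \<in> Mor G \<Longrightarrow> m \<in> Mor G \<Longrightarrow> src G l = rng G m \<Longrightarrow>
   deg G (cmp G l m) = deg G l + deg G m"
  using PG unfolding is_P_graph_def by blast

lemma degP: "l \<in> Mor G \<Longrightarrow> deg G l \<in> P"
  using PG unfolding is_P_graph_def by blast

lemma deg_idm: "v \<in> Obj G \<Longrightarrow> deg G (idm G v) = 0"
  using PG unfolding is_P_graph_def by blast

lemma uf:
  assumes a: "a \<in> Mor G" and b: "b \<in> Mor G" and c: "c \<in> Mor G" and d: "d \<in> Mor G"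
    and ab: "src G a = rng G b" and cd: "src G c = rng G d"
    and eq: "cmp G a b = cmp G c d" and dg: "deg G a = deg G c"
  shows "a = c \<and> b = d"
proof -
  have "deg G (cmp G a b) = deg G a + deg G b" using deg_cmp a b ab by blast
  moreover have "deg G (cmp G c d) = deg G c + deg G d" using deg_cmp c d cd by blast
  ultimately have db: "deg G b = deg G d" using eq dg by (metis add_left_cancel)
  have lM: "cmp G a b \<in> Mor G" using cmpM a b ab by blast
  have "\<exists>!(m, n). m \<in> Mor G \<and> n \<in> Mor G \<and> src G m = rng G n \<and>
                   cmp G a b = cmp G m n \<and> deg G m = deg G a \<and> deg G n = deg G b"
    using PG lM degP[OF a] degP[OF b] deg_cmp[OF a b ab] unfolding is_P_graph_def by blast
  then obtain z where z: "\<forall>y. (case y of (m, n) \<Rightarrow> m \<in> Mor G \<and> n \<in> Mor G \<and> src G m = rng G n \<and>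
                   cmp G a b = cmp G m n \<and> deg G m = deg G a \<and> deg G n = deg G b) \<longrightarrow> y = z"
    by (auto simp: Ex1_def)
  have "(a, b) = z" using z a b ab by auto
  moreover have "(c, d) = z" using z c d cd eq dg db by auto
  ultimately show ?thesis by auto
qed

lemma cancel: "l \<in> Mor G \<Longrightarrow> a \<in> Mor G \<Longrightarrow> b \<in> Mor G \<Longrightarrow> src G l = rng G a \<Longrightarrow>
   src G l = rng G b \<Longrightarrow> cmp G l a = cmp G l b \<Longrightarrow> a = b"
  using uf by blast

lemma ext_iff: "y \<in> ext_set G l \<longleftrightarrow> (\<exists>c. c \<in> Mor G \<and> src G l = rng G c \<and> y = cmp G l c)"
  by (auto simp: ext_set_def)

lemma prec_iff: "preceq G m l \<longleftrightarrow> m \<in> Mor G \<and> (\<exists>c. c \<in> Mor G \<and> src G m = rng G c \<and> l = cmp G m c)"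
  by (auto simp: preceq_def ext_set_def)

lemma fdir:
  assumes "is_filter G x" "l \<in> x" "l' \<in> x"
  shows "\<exists>n\<in>x. \<exists>a b. a \<in> Mor G \<and> b \<in> Mor G \<and> src G l = rng G a \<and> src G l' = rng G b \<and>
           n = cmp G l a \<and> n = cmp G l' b"
  using assms unfolding is_filter_def prec_iff by metis

lemma fsub: "is_filter G x \<Longrightarrow> l \<in> x \<Longrightarrow> l \<in> Mor G"
  unfolding is_filter_def by blast

lemma fhere: "is_filter G x \<Longrightarrow> l \<in> x \<Longrightarrow> m \<in> Mor G \<Longrightarrow> c \<in> Mor G \<Longrightarrow> src G m = rng G c \<Longrightarrow>
   l = cmp G m c \<Longrightarrow> m \<in> x"
  unfolding is_filter_def prec_iff by blast

lemma finj:
  assumes f: "is_filter G x" and l: "l \<in> x" and l': "l' \<in> x" and dg: "deg G l = deg G l'"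
  shows "l = l'"
proof -
  obtain n a b where "a \<in> Mor G" "b \<in> Mor G" "src G l = rng G a" "src G l' = rng G b"
    "n = cmp G l a" "n = cmp G l' b" using fdir[OF f l l'] by blast
  then show ?thesis using uf fsub[OF f l] fsub[OF f l'] dg by metis
qed

lemma frng:
  assumes f: "is_filter G x" and l: "l \<in> x" and l': "l' \<in> x"
  shows "rng G l = rng G l'"
proof -
  obtain n a b where "a \<in> Mor G" "b \<in> Mor G" "src G l = rng G a" "src G l' = rng G b"
    "n = cmp G l a" "n = cmp G l' b" using fdir[OF f l l'] by blast
  then show ?thesis using cmpM fsub[OF f l] fsub[OF f l'] by metis
qed

lemma seg0_eq: "is_filter G x \<Longrightarrow> l \<in> x \<Longrightarrow> seg0 G x (deg G l) = l"
  unfolding seg0_def by (rule the_equality) (auto dest: finj)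

lemma shift_eq: "is_filter G x \<Longrightarrow> l \<in> x \<Longrightarrow>
   shift G x (deg G l) = {u \<in> Mor G. src G l = rng G u \<and> cmp G l u \<in> x}"
  unfolding shift_def using seg0_eq by simp

lemma FA_up:
  assumes la: "la \<in> FA G" and n: "n \<in> Mor G" and a: "a \<in> Mor G" and s: "src G la = rng G a"
    and e: "n = cmp G la a"
  shows "n \<in> FA G"
proof -
  have laM: "la \<in> Mor G" using la by (simp add: FA_def)
  have "ext_set G n \<subseteq> ext_set G la"
  proof
    fix y assume "y \<in> ext_set G n"
    then obtain c where c: "c \<in> Mor G" "src G n = rng G c" "y = cmp G n c" by (auto simp: ext_iff)
    have "src G a = rng G c" using c cmpM laM a s e by metis
    hence "y = cmp G la (cmp G a c)" "cmp G a c \<in> Mor G" "rng G (cmp G a c) = src G la"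
      using assoc cmpM laM a s e c by metis+
    thus "y \<in> ext_set G la" by (auto simp: ext_iff)
  qed
  thus ?thesis using la n unfolding FA_def by blast
qed

lemma FA_shift:
  assumes l: "l \<in> Mor G" and k: "k \<in> Mor G" and s: "src G l = rng G k" and fa: "cmp G l k \<in> FA G"
  shows "k \<in> FA G"
  unfolding FA_def
proof (intro CollectI conjI ballI k)
  fix mu nu assume mu: "mu \<in> ext_set G k" and nu: "nu \<in> Mor G"
  obtain c0 where c0: "c0 \<in> Mor G" "src G k = rng G c0" "mu = cmp G k c0"
    using mu unfolding ext_iff by blast
  have muM: "mu \<in> Mor G" using cM[OF k c0(1,2)] c0(3) by simp
  have rmu: "rng G mu = src G l" using cR[OF k c0(1,2)] c0(3) s by simp
  show "\<exists>J. finite J \<and> J \<subseteq> Mor G \<and> ext_set G mu \<inter> ext_set G nu = (\<Union>k\<in>J. ext_set G k)"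
  proof (cases "rng G nu = src G l")
    case False
    have "ext_set G mu \<inter> ext_set G nu = {}"
    proof (rule ccontr)
      assume "ext_set G mu \<inter> ext_set G nu \<noteq> {}"
      then obtain y where y: "y \<in> ext_set G mu" "y \<in> ext_set G nu" by blast
      obtain c where c: "c \<in> Mor G" "src G mu = rng G c" "y = cmp G mu c"
        using y(1) unfolding ext_iff by blast
      obtain d where d: "d \<in> Mor G" "src G nu = rng G d" "y = cmp G nu d"
        using y(2) unfolding ext_iff by blast
      have "rng G y = rng G mu" using cR[OF muM c(1,2)] c(3) by simp
      moreover have "rng G y = rng G nu" using cR[OF nu d(1,2)] d(3) by simp
      ultimately show False using rmu False by simp
    qed
    thus ?thesis by (intro exI[of _ "{}"]) auto
  next
    case True
    have lmuM: "cmp G l mu \<in> Mor G" using cM[OF l muM rmu[symmetric]] .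
    have slmu: "src G (cmp G l mu) = src G mu" using cS[OF l muM rmu[symmetric]] .
    have slnu: "src G (cmp G l nu) = src G nu" using cS[OF l nu True[symmetric]] .
    have lnu: "cmp G l nu \<in> Mor G" using cM[OF l nu True[symmetric]] .
    have lmu: "cmp G l mu \<in> ext_set G (cmp G l k)"
    proof -
      have "cmp G l mu = cmp G (cmp G l k) c0" using assoc[OF l k c0(1) s c0(2)] c0(3) by simp
      moreover have "src G (cmp G l k) = rng G c0" using cS[OF l k s] c0(2) by simp
      ultimately show ?thesis using c0(1) unfolding ext_iff by blast
    qed
    obtain J where J: "finite J" "J \<subseteq> Mor G"
      "ext_set G (cmp G l mu) \<inter> ext_set G (cmp G l nu) = (\<Union>k\<in>J. ext_set G k)"
      using fa lmu lnu unfolding FA_def by blast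
    define J' where "J' = {k' \<in> Mor G. src G l = rng G k' \<and> cmp G l k' \<in> J}"
    have inj: "inj_on (cmp G l) J'" unfolding J'_def inj_on_def using cancel[OF l] by blast
    have img: "cmp G l ` J' \<subseteq> J" unfolding J'_def by auto
    have fin: "finite J'" using finite_imageD[OF finite_subset[OF img J(1)] inj] .
    have eq: "ext_set G mu \<inter> ext_set G nu = (\<Union>k\<in>J'. ext_set G k)"
    proof (intro equalityI subsetI)
      fix y assume y: "y \<in> ext_set G mu \<inter> ext_set G nu"
      obtain c where c: "c \<in> Mor G" "src G mu = rng G c" "y = cmp G mu c"
        using IntD1[OF y] unfolding ext_iff by blast
      obtain d where d: "d \<in> Mor G" "src G nu = rng G d" "y = cmp G nu d"
        using IntD2[OF y] unfolding ext_iff by blast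
      have yM: "y \<in> Mor G" using cM[OF muM c(1,2)] c(3) by simp
      have ry: "rng G y = src G l" using cR[OF muM c(1,2)] c(3) rmu by simp
      have e1: "cmp G l y = cmp G (cmp G l mu) c"
        using assoc[OF l muM c(1) rmu[symmetric] c(2)] c(3) by simp
      have m1: "cmp G l y \<in> ext_set G (cmp G l mu)"
        unfolding ext_iff using e1 c(1,2) slmu by auto
      have e2: "cmp G l y = cmp G (cmp G l nu) d"
        using assoc[OF l nu d(1) True[symmetric] d(2)] d(3) by simp
      have m2: "cmp G l y \<in> ext_set G (cmp G l nu)"
        unfolding ext_iff using e2 d(1,2) slnu by auto
      obtain kk where kk: "kk \<in> J" "cmp G l y \<in> ext_set G kk" using J(3) m1 m2 by blast
      obtain e where e: "e \<in> Mor G" "src G kk = rng G e" "cmp G l y = cmp G kk e"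
        using kk(2) unfolding ext_iff by blast
      have kkM: "kk \<in> Mor G" using kk(1) J(2) by blast
      have "kk \<in> ext_set G kk" unfolding ext_iff
        using idr[OF kkM] idmM[OF conjunct2[OF objs[OF kkM]]] by metis
      hence "kk \<in> ext_set G (cmp G l mu)" using kk(1) J(3) by blast
      then obtain f where f: "f \<in> Mor G" "src G (cmp G l mu) = rng G f" "kk = cmp G (cmp G l mu) f"
        unfolding ext_iff by blast
      have fm: "src G mu = rng G f" using f(2) slmu by simp
      define k' where "k' = cmp G mu f"
      have k'M: "k' \<in> Mor G" unfolding k'_def using cM[OF muM f(1) fm] .
      have rk': "rng G k' = src G l" unfolding k'_def using cR[OF muM f(1) fm] rmu by simp
      have kk': "kk = cmp G l k'" unfolding k'_def using f(3) assoc[OF l muM f(1) rmu[symmetric] fm] by simp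
      have sk': "src G k' = src G kk" unfolding k'_def using cS[OF muM f(1) fm] cS[OF lmuM f(1) f(2)] f(3) by simp
      have ek: "src G k' = rng G e" using sk' e(2) by simp
      have inJ': "k' \<in> J'" using k'M rk' kk' kk(1) unfolding J'_def by auto
      have "cmp G l y = cmp G l (cmp G k' e)" using e(3) kk' assoc[OF l k'M e(1) rk'[symmetric] ek] by simp
      moreover have "cmp G k' e \<in> Mor G" using cM[OF k'M e(1) ek] .
      moreover have "rng G (cmp G k' e) = src G l" using cR[OF k'M e(1) ek] rk' by simp
      ultimately have "y = cmp G k' e" using cancel[OF l yM] ry by metis
      hence "y \<in> ext_set G k'" using e(1) ek unfolding ext_iff by blast
      thus "y \<in> (\<Union>k\<in>J'. ext_set G k)" using inJ' by blast
    next
      fix y assume "y \<in> (\<Union>k\<in>J'. ext_set G k)"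
      then obtain k' where k'0: "k' \<in> J'" "y \<in> ext_set G k'" by blast
      have k': "k' \<in> Mor G" "src G l = rng G k'" "cmp G l k' \<in> J" using k'0(1) unfolding J'_def by auto
      obtain e where e: "e \<in> Mor G" "src G k' = rng G e" "y = cmp G k' e"
        using k'0(2) unfolding ext_iff by blast
      have yM: "y \<in> Mor G" using cM[OF k'(1) e(1,2)] e(3) by simp
      have ry: "rng G y = src G l" using cR[OF k'(1) e(1,2)] e(3) k'(2) by simp
      have "cmp G l y = cmp G (cmp G l k') e" using assoc[OF l k'(1) e(1) k'(2) e(2)] e(3) by simp
      moreover have "src G (cmp G l k') = rng G e" using cS[OF l k'(1) k'(2)] e(2) by simp
      ultimately have "cmp G l y \<in> ext_set G (cmp G l k')" using e(1) unfolding ext_iff by blast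
      hence ly: "cmp G l y \<in> ext_set G (cmp G l mu) \<inter> ext_set G (cmp G l nu)" using J(3) k'(3) by blast
      obtain c where c: "c \<in> Mor G" "src G (cmp G l mu) = rng G c" "cmp G l y = cmp G (cmp G l mu) c"
        using IntD1[OF ly] unfolding ext_iff by blast
      have cm: "src G mu = rng G c" using c(2) slmu by simp
      have "cmp G l y = cmp G l (cmp G mu c)" using c(3) assoc[OF l muM c(1) rmu[symmetric] cm] by simp
      moreover have "cmp G mu c \<in> Mor G" using cM[OF muM c(1) cm] .
      moreover have "rng G (cmp G mu c) = src G l" using cR[OF muM c(1) cm] rmu by simp
      ultimately have "y = cmp G mu c" using cancel[OF l yM] ry by metis
      hence y1: "y \<in> ext_set G mu" using c(1) cm unfolding ext_iff by blast
      obtain d where d: "d \<in> Mor G" "src G (cmp G l nu) = rng G d" "cmp G l y = cmp G (cmp G l nu) d"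
        using IntD2[OF ly] unfolding ext_iff by blast
      have dn: "src G nu = rng G d" using d(2) slnu by simp
      have "cmp G l y = cmp G l (cmp G nu d)" using d(3) assoc[OF l nu d(1) True[symmetric] dn] by simp
      moreover have "cmp G nu d \<in> Mor G" using cM[OF nu d(1) dn] .
      moreover have "rng G (cmp G nu d) = src G l" using cR[OF nu d(1) dn] True by simp
      ultimately have "y = cmp G nu d" using cancel[OF l yM] ry by metis
      hence "y \<in> ext_set G nu" using d(1) dn unfolding ext_iff by blast
      thus "y \<in> ext_set G mu \<inter> ext_set G nu" using y1 by blast
    qed
    show ?thesis using fin eq J'_def by (intro exI[of _ J']) auto
  qed
qed

lemma shift_path:
  assumes x: "x \<in> path_space G" and l: "l \<in> x"
  shows "shift G x (deg G l) \<in> path_space G"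
proof -
  have f: "is_filter G x" using x by (simp add: path_space_def)
  have lM: "l \<in> Mor G" using fsub f l by blast
  let ?S = "{u \<in> Mor G. src G l = rng G u \<and> cmp G l u \<in> x}"
  have S: "shift G x (deg G l) = ?S" using shift_eq f l by blast
  have iM: "idm G (src G l) \<in> Mor G" "rng G (idm G (src G l)) = src G l"
    using idmM[OF conjunct2[OF objs[OF lM]]] by auto
  have ne: "idm G (src G l) \<in> ?S" using iM idr[OF lM] l by simp
  have her: "\<forall>u\<in>?S. \<forall>w. preceq G w u \<longrightarrow> w \<in> ?S"
  proof (intro ballI allI impI)
    fix u w assume u: "u \<in> ?S" and "preceq G w u"
    then obtain c where c: "w \<in> Mor G" "c \<in> Mor G" "src G w = rng G c" "u = cmp G w c"
      unfolding prec_iff by blast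
    have rw: "rng G w = src G l" using u c(4) cR[OF c(1,2,3)] by simp
    have "cmp G l u = cmp G (cmp G l w) c" using assoc[OF lM c(1,2) rw[symmetric] c(3)] c(4) by simp
    moreover have "cmp G l w \<in> Mor G" using cM[OF lM c(1) rw[symmetric]] .
    moreover have "src G (cmp G l w) = rng G c" using cS[OF lM c(1) rw[symmetric]] c(3) by simp
    ultimately have "cmp G l w \<in> x" using fhere[OF f _ _ c(2)] u by blast
    thus "w \<in> ?S" using c rw by auto
  qed
  have dir: "\<forall>u\<in>?S. \<forall>u'\<in>?S. \<exists>n\<in>?S. preceq G u n \<and> preceq G u' n"
  proof (intro ballI)
    fix u u' assume u: "u \<in> ?S" and u': "u' \<in> ?S"
    have uM: "u \<in> Mor G" "src G l = rng G u" "cmp G l u \<in> x" using u by auto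
    have uM': "u' \<in> Mor G" "src G l = rng G u'" "cmp G l u' \<in> x" using u' by auto
    obtain n a b where nab: "n \<in> x" "a \<in> Mor G" "b \<in> Mor G" "src G (cmp G l u) = rng G a"
      "src G (cmp G l u') = rng G b" "n = cmp G (cmp G l u) a" "n = cmp G (cmp G l u') b"
      using fdir[OF f uM(3) uM'(3)] by blast
    have sa: "src G u = rng G a" using nab(4) cS[OF lM uM(1,2)] by simp
    have sb: "src G u' = rng G b" using nab(5) cS[OF lM uM'(1,2)] by simp
    have n1: "n = cmp G l (cmp G u a)" using assoc[OF lM uM(1) nab(2) uM(2) sa] nab(6) by simp
    have n2: "n = cmp G l (cmp G u' b)" using assoc[OF lM uM'(1) nab(3) uM'(2) sb] nab(7) by simp
    have k1: "cmp G u a \<in> Mor G" "rng G (cmp G u a) = src G l"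
      using cM[OF uM(1) nab(2) sa] cR[OF uM(1) nab(2) sa] uM(2) by auto
    have k2: "cmp G u' b \<in> Mor G" "rng G (cmp G u' b) = src G l"
      using cM[OF uM'(1) nab(3) sb] cR[OF uM'(1) nab(3) sb] uM'(2) by auto
    have eq: "cmp G u a = cmp G u' b"
      using cancel[OF lM k1(1) k2(1) k1(2)[symmetric] k2(2)[symmetric]] n1 n2 by simp
    have "cmp G u a \<in> ?S" using k1 n1 nab(1) by auto
    moreover have "preceq G u (cmp G u a)" unfolding prec_iff using uM(1) nab(2) sa by blast
    moreover have "preceq G u' (cmp G u a)" unfolding prec_iff using uM'(1) nab(3) sb eq by blast
    ultimately show "\<exists>n\<in>?S. preceq G u n \<and> preceq G u' n" by blast
  qed
  obtain la where la: "la \<in> x" "la \<in> FA G" using x by (auto simp: path_space_def)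
  obtain n a b where nab: "n \<in> x" "a \<in> Mor G" "b \<in> Mor G" "src G la = rng G a"
      "src G l = rng G b" "n = cmp G la a" "n = cmp G l b"
    using fdir[OF f la(1) l] by blast
  have "n \<in> FA G" using FA_up[OF la(2) fsub[OF f nab(1)] nab(2) nab(4) nab(6)] .
  hence "b \<in> FA G" using FA_shift[OF lM nab(3) nab(5)] nab(7) by simp
  moreover have "b \<in> ?S" using nab by auto
  ultimately have "?S \<inter> FA G \<noteq> {}" by blast
  moreover have "is_filter G ?S" unfolding is_filter_def using ne her dir by blast
  ultimately show ?thesis using S by (simp add: path_space_def)
qed

end

theorem proposition5p9:
  fixes P :: "'q::group_add set" and G :: "('o, 'a, 'q) pgraph"
  assumes "wqlo P" and "is_P_graph P G" and "FA G \<noteq> {}"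
  shows "(\<forall>(x, m)\<in>XP P G. (\<exists>!l. l \<in> x \<and> l \<in> Lam_deg G m) \<and> shift G x m \<in> path_space G)
       \<and> (\<forall>x\<in>path_space G. (x, 0) \<in> XP P G \<and> shift G x 0 = x)
       \<and> (\<forall>x\<in>path_space G. \<forall>m\<in>P. \<forall>n\<in>P.
            ((x, m + n) \<in> XP P G \<longleftrightarrow> (x, m) \<in> XP P G \<and> (shift G x m, n) \<in> XP P G) \<and>
            ((x, m + n) \<in> XP P G \<longrightarrow> shift G (shift G x m) n = shift G x (m + n)))"
proof -
  interpret pg P G using assms(2) by (simp add: pg_def)
  have P1: "\<forall>(x, m)\<in>XP P G. (\<exists>!l. l \<in> x \<and> l \<in> Lam_deg G m) \<and> shift G x m \<in> path_space G"
  proof (clarify)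
    fix x m assume xm: "(x, m) \<in> XP P G"
    then have x: "x \<in> path_space G" and f: "is_filter G x" and "x \<inter> Lam_deg G m \<noteq> {}"
      by (auto simp: XP_def path_space_def)
    then obtain l where l: "l \<in> x" "deg G l = m" by (auto simp: Lam_deg_def)
    have "\<exists>!l. l \<in> x \<and> l \<in> Lam_deg G m"
      using l finj[OF f] fsub[OF f] by (auto simp: Lam_deg_def)
    moreover have "shift G x m \<in> path_space G" using shift_path[OF x l(1)] l by simp
    ultimately show "(\<exists>!l. l \<in> x \<and> l \<in> Lam_deg G m) \<and> shift G x m \<in> path_space G" by blast
  qed
  have P2: "\<forall>x\<in>path_space G. (x, 0) \<in> XP P G \<and> shift G x 0 = x"
  proof
    fix x assume x: "x \<in> path_space G"
    then have f: "is_filter G x" by (simp add: path_space_def)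
    then obtain l where l: "l \<in> x" unfolding is_filter_def by blast
    have lM: "l \<in> Mor G" using fsub f l by blast
    define i where "i = idm G (rng G l)"
    have iM: "i \<in> Mor G" "rng G i = rng G l" "src G i = rng G l" "deg G i = 0"
      using idmM deg_idm objs lM unfolding i_def by auto
    have ix: "i \<in> x" using fhere[OF f l iM(1) lM] iM(3) idl[OF lM] unfolding i_def by simp
    have "(x, 0) \<in> XP P G" using x ix iM degP unfolding XP_def Lam_deg_def by force
    moreover have "shift G x 0 = x"
    proof -
      have "shift G x 0 = {u \<in> Mor G. src G i = rng G u \<and> cmp G i u \<in> x}"
        using shift_eq[OF f ix] iM by simp
      also have "\<dots> = x"
      proof (intro equalityI subsetI)
        fix u assume "u \<in> {u \<in> Mor G. src G i = rng G u \<and> cmp G i u \<in> x}"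
        then show "u \<in> x" using idl iM unfolding i_def by auto
      next
        fix u assume u: "u \<in> x"
        have "rng G u = rng G l" using frng[OF f u l] .
        then show "u \<in> {u \<in> Mor G. src G i = rng G u \<and> cmp G i u \<in> x}"
          using idl[OF fsub[OF f u]] fsub[OF f u] u iM(3) unfolding i_def by simp
      qed
      finally show ?thesis .
    qed
    ultimately show "(x, 0) \<in> XP P G \<and> shift G x 0 = x" by blast
  qed
  have P3: "\<forall>x\<in>path_space G. \<forall>m\<in>P. \<forall>n\<in>P.
            ((x, m + n) \<in> XP P G \<longleftrightarrow> (x, m) \<in> XP P G \<and> (shift G x m, n) \<in> XP P G) \<and>
            ((x, m + n) \<in> XP P G \<longrightarrow> shift G (shift G x m) n = shift G x (m + n))"
  proof (intro ballI)
    fix x m n assume x: "x \<in> path_space G" and m: "m \<in> P" and n: "n \<in> P"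
    have f: "is_filter G x" using x by (simp add: path_space_def)
    have mn: "m + n \<in> P" using assms(1) m n by (simp add: wqlo_def)
    have fwd: "\<exists>a b. a \<in> x \<and> deg G a = m \<and> b \<in> Mor G \<and> deg G b = n \<and> src G a = rng G b
                 \<and> cmp G a b \<in> x" if "(x, m + n) \<in> XP P G"
    proof -
      have "x \<inter> Lam_deg G (m + n) \<noteq> {}" using that by (simp add: XP_def)
      then obtain l where l0: "l \<in> x \<inter> Lam_deg G (m + n)" by blast
      hence l: "l \<in> x" "deg G l = m + n" by (auto simp: Lam_deg_def)
      have lM: "l \<in> Mor G" using fsub f l by blast
      obtain a b where ab: "a \<in> Mor G" "b \<in> Mor G" "src G a = rng G b" "l = cmp G a b"
        "deg G a = m" "deg G b = n"
        using assms(2) lM l m n unfolding is_P_graph_def by blast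
      have "a \<in> x" using fhere[OF f l(1) ab(1,2,3,4)] .
      thus ?thesis using ab l by blast
    qed
    have bwd: "(x, m + n) \<in> XP P G" if a: "a \<in> x" "deg G a = m" and b: "b \<in> Mor G" "deg G b = n"
      "src G a = rng G b" "cmp G a b \<in> x" for a b
    proof -
      have "deg G (cmp G a b) = m + n" using deg_cmp[OF fsub[OF f a(1)] b(1) b(3)] b a by simp
      thus ?thesis using x mn b(4) fsub[OF f b(4)] by (auto simp: XP_def Lam_deg_def)
    qed
    have iff: "(x, m + n) \<in> XP P G \<longleftrightarrow> (x, m) \<in> XP P G \<and> (shift G x m, n) \<in> XP P G"
    proof
      assume "(x, m + n) \<in> XP P G"
      then obtain a b where ab: "a \<in> x" "deg G a = m" "b \<in> Mor G" "deg G b = n" "src G a = rng G b"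
        "cmp G a b \<in> x" using fwd by blast
      have xm: "(x, m) \<in> XP P G" using x m ab fsub[OF f] by (auto simp: XP_def Lam_deg_def)
      have "shift G x m = {u \<in> Mor G. src G a = rng G u \<and> cmp G a u \<in> x}"
        using shift_eq[OF f ab(1)] ab by simp
      hence "b \<in> shift G x m" using ab by auto
      moreover have "shift G x m \<in> path_space G" using shift_path[OF x ab(1)] ab by simp
      ultimately have "(shift G x m, n) \<in> XP P G" using n ab by (auto simp: XP_def Lam_deg_def)
      thus "(x, m) \<in> XP P G \<and> (shift G x m, n) \<in> XP P G" using xm by blast
    next
      assume h: "(x, m) \<in> XP P G \<and> (shift G x m, n) \<in> XP P G"
      then obtain a where a: "a \<in> x" "deg G a = m" by (auto simp: XP_def Lam_deg_def)
      have S: "shift G x m = {u \<in> Mor G. src G a = rng G u \<and> cmp G a u \<in> x}"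
        using shift_eq[OF f a(1)] a by simp
      obtain b where "b \<in> shift G x m" "deg G b = n" using h by (auto simp: XP_def Lam_deg_def)
      thus "(x, m + n) \<in> XP P G" using bwd[OF a] S by auto
    qed
    have eqs: "shift G (shift G x m) n = shift G x (m + n)" if h: "(x, m + n) \<in> XP P G"
    proof -
      obtain a b where ab: "a \<in> x" "deg G a = m" "b \<in> Mor G" "deg G b = n" "src G a = rng G b"
        "cmp G a b \<in> x" using fwd h by blast
      have aM: "a \<in> Mor G" using fsub f ab by blast
      have S: "shift G x m = {u \<in> Mor G. src G a = rng G u \<and> cmp G a u \<in> x}"
        using shift_eq[OF f ab(1)] ab by simp
      have bS: "b \<in> shift G x m" using S ab by auto
      have fS: "is_filter G (shift G x m)"
        using shift_path[OF x ab(1)] ab by (simp add: path_space_def)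
      have S2: "shift G (shift G x m) n = {u \<in> Mor G. src G b = rng G u \<and> cmp G b u \<in> shift G x m}"
        using shift_eq[OF fS bS] ab by simp
      have dab: "deg G (cmp G a b) = m + n" using deg_cmp[OF aM ab(3) ab(5)] ab by simp
      have S3: "shift G x (m + n) = {u \<in> Mor G. src G (cmp G a b) = rng G u \<and> cmp G (cmp G a b) u \<in> x}"
        using shift_eq[OF f ab(6)] dab by simp
      have sab: "src G (cmp G a b) = src G b" using cS[OF aM ab(3) ab(5)] .
      have S2': "shift G (shift G x m) n = {u \<in> Mor G. src G b = rng G u \<and> cmp G b u \<in> {u \<in> Mor G. src G a = rng G u \<and> cmp G a u \<in> x}}"
        using S2 S by simp
      show ?thesis unfolding S2' S3
      proof (intro equalityI subsetI)
        fix u assume "u \<in> {u \<in> Mor G. src G b = rng G u \<and> cmp G b u \<in> {u \<in> Mor G. src G a = rng G u \<and> cmp G a u \<in> x}}"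
        then show "u \<in> {u \<in> Mor G. src G (cmp G a b) = rng G u \<and> cmp G (cmp G a b) u \<in> x}"
          using assoc aM ab sab by auto
      next
        fix u assume u: "u \<in> {u \<in> Mor G. src G (cmp G a b) = rng G u \<and> cmp G (cmp G a b) u \<in> x}"
        have "cmp G b u \<in> Mor G" "src G a = rng G (cmp G b u)" using cmpM ab u sab by auto
        then show "u \<in> {u \<in> Mor G. src G b = rng G u \<and> cmp G b u \<in> {u \<in> Mor G. src G a = rng G u \<and> cmp G a u \<in> x}}"
          using assoc aM ab sab u by auto
      qed
    qed
    show "((x, m + n) \<in> XP P G \<longleftrightarrow> (x, m) \<in> XP P G \<and> (shift G x m, n) \<in> XP P G) \<and>
            ((x, m + n) \<in> XP P G \<longrightarrow> shift G (shift G x m) n = shift G x (m + n))"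
      using iff eqs by blast
  qed
  show ?thesis using P1 P2 P3 by blast
qed

end
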